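(* Let $(X,\|\cdot\|)$ be a strictly convex two-dimensional real normed space with closed unit ball $B_X$ and unit sphere $S_X$. Fix a basis $\{e_1,e_2\}$ of $X$ and write $(s,t)=se_1+te_2$. Let $\alpha>0$ be such that $(\alpha,1),(\alpha,-1)\in S_X$, and let $\delta>0$ be such that $(0,\delta)\in S_X$. Then $$B_X\cap\bigl(]\alpha,\infty[\times\mathbb R\bigr)\subset(\alpha,0)+\delta^{-1}\operatorname{int}(B_X)$$ and $$\bigl((\alpha,0)+\delta^{-1}B_X\bigr)\cap\bigl(]-\infty,\alpha[\times\mathbb R\bigr)\subset\operatorname{int}(B_X),$$ where $I\times\mathbb R$ denotes $\{(s,t):s\in I,\ t\in\mathbb R\}$.
   Context: A norm is strictly convex if the unit sphere contains no nondegenerate line segment. $\operatorname{int}$ denotes the interior, $]a,b[$ an open interval. *)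

theory Defs
  imports "HOL-Analysis.Analysis"
begin

definition strictly_convex_norm :: "'a::real_normed_vector itself \<Rightarrow> bool" where
  "strictly_convex_norm _ \<longleftrightarrow>
     (\<forall>x y::'a. x \<noteq> y \<longrightarrow> \<not> (closed_segment x y \<subseteq> sphere 0 1))"

definition coord :: "'a::real_normed_vector \<Rightarrow> 'a \<Rightarrow> real \<Rightarrow> real \<Rightarrow> 'a" where
  "coord e1 e2 s t = s *\<^sub>R e1 + t *\<^sub>R e2"

definition strip :: "'a::real_normed_vector \<Rightarrow> 'a \<Rightarrow> real set \<Rightarrow> 'a set" where
  "strip e1 e2 I = {coord e1 e2 s t | s t. s \<in> I}"

end

theory Submission
  imports Defs
begin

lemma coord_add: "coord e1 e2 s t + coord e1 e2 s' t' = coord e1 e2 (s+s') (t+t')"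
  by (simp add: coord_def algebra_simps)
lemma coord_scale: "c *\<^sub>R coord e1 e2 s t = coord e1 e2 (c * s) (c * t)"
  by (simp add: coord_def algebra_simps)
lemma coord_minus: "- coord e1 e2 s t = coord e1 e2 (-s) (-t)"
  by (simp add: coord_def)
lemma coord_diff: "coord e1 e2 s t - coord e1 e2 s' t' = coord e1 e2 (s-s') (t-t')"
  by (simp add: coord_def algebra_simps)
lemma coord_cong: "s = s' \<Longrightarrow> t = t' \<Longrightarrow> coord e1 e2 s t = coord e1 e2 s' t'"
  by simp

lemma coord_inj:
  fixes e1 e2 :: "'a::real_normed_vector"
  assumes "e1 \<noteq> e2" "independent {e1,e2}" "coord e1 e2 s t = coord e1 e2 s' t'"
  shows "s = s' \<and> t = t'"
proof -
  have ind: "independent {e2}" "e1 \<notin> span {e2}"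
    using assms(1,2) by (auto simp: independent_insert)
  have e2: "e2 \<noteq> 0" using ind(1) by simp
  have eq: "(s - s') *\<^sub>R e1 = (t' - t) *\<^sub>R e2"
    using assms(3) by (simp add: coord_def algebra_simps)
  have "s = s'"
  proof (rule ccontr)
    assume "s \<noteq> s'"
    then have "e1 = ((t' - t) / (s - s')) *\<^sub>R e2"
      using eq by (metis divide_inverse_commute eq_vector_fraction_iff right_minus_eq)
    then have "e1 \<in> span {e2}" by (simp add: span_base span_scale)
    with ind show False by simp
  qed
  with eq e2 show ?thesis by simp
qed

lemma norm_comb: "0 \<le> a \<Longrightarrow> 0 \<le> b \<Longrightarrow> norm (a *\<^sub>R x + b *\<^sub>R y) \<le> a * norm x + b * norm y"
  by (metis abs_of_nonneg norm_scaleR norm_triangle_ineq)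

lemma comb_lt1:
  fixes p q :: "'a::real_normed_vector"
  assumes "0 < \<theta>" "\<theta> \<le> 1" "norm p < 1" "norm q \<le> 1"
  shows "norm (\<theta> *\<^sub>R p + (1-\<theta>) *\<^sub>R q) < 1"
proof -
  have "norm (\<theta> *\<^sub>R p + (1-\<theta>) *\<^sub>R q) \<le> \<theta> * norm p + (1-\<theta>) * norm q"
    using assms by (intro norm_comb) auto
  also have "\<dots> < \<theta> * 1 + (1-\<theta>) * 1"
    using assms by (intro add_less_le_mono mult_strict_left_mono mult_left_mono) auto
  finally show ?thesis by simp
qed

lemma strict_seg:
  fixes x y :: "'a::real_normed_vector"
  assumes sc: "strictly_convex_norm TYPE('a)" and nx: "norm x \<le> 1" and ny: "norm y \<le> 1"
    and xy: "x \<noteq> y" and th: "0 < \<theta>" "\<theta> < 1"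
  shows "norm ((1-\<theta>) *\<^sub>R x + \<theta> *\<^sub>R y) < 1"
proof (rule ccontr)
  define p where "p = (\<lambda>\<mu>. (1-\<mu>) *\<^sub>R x + \<mu> *\<^sub>R y)"
  have le: "norm (p \<mu>) \<le> 1" if "0 \<le> \<mu>" "\<mu> \<le> 1" for \<mu>
  proof -
    have "norm (p \<mu>) \<le> (1-\<mu>) * norm x + \<mu> * norm y"
      unfolding p_def using that by (intro norm_comb) auto
    also have "\<dots> \<le> (1-\<mu>) * 1 + \<mu> * 1"
      using that nx ny by (intro add_mono mult_left_mono) auto
    finally show ?thesis by simp
  qed
  assume "\<not> norm ((1-\<theta>) *\<^sub>R x + \<theta> *\<^sub>R y) < 1"
  then have pt: "norm (p \<theta>) = 1" using le[of \<theta>] th unfolding p_def by auto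
  have ge: "norm (p \<mu>) \<ge> 1" if "0 \<le> \<mu>" "\<mu> \<le> 1" for \<mu>
  proof (cases "\<mu> \<le> \<theta>")
    case True
    define l where "l = (\<theta> - \<mu>) / (1 - \<mu>)"
    have m1: "\<mu> < 1" using True th by simp
    have l: "0 \<le> l" "l < 1" using True th m1 that unfolding l_def by (auto simp: field_simps)
    have m0: "1 - \<mu> \<noteq> 0" using m1 by simp
    have c1: "(1-l)*(1-\<mu>) = 1-\<theta>"
      using m0 unfolding l_def by (simp add: field_simps)
    have c2: "(1-l)*\<mu> + l = \<theta>"
    proof -
      have "1 - l = (1-\<theta>)/(1-\<mu>)" using m0 unfolding l_def by (simp add: field_simps)
      then have "(1-l)*\<mu> + l = ((1-\<theta>)*\<mu> + (\<theta>-\<mu>))/(1-\<mu>)"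
        unfolding l_def by (simp add: add_divide_distrib)
      also have "(1-\<theta>)*\<mu> + (\<theta>-\<mu>) = \<theta> * (1-\<mu>)" by (simp add: algebra_simps)
      finally show ?thesis using m0 by simp
    qed
    have "(1-l) *\<^sub>R p \<mu> + l *\<^sub>R y = ((1-l)*(1-\<mu>)) *\<^sub>R x + ((1-l)*\<mu> + l) *\<^sub>R y"
      unfolding p_def by (simp add: algebra_simps)
    also have "\<dots> = p \<theta>" unfolding p_def c1 c2 ..
    finally have "1 \<le> (1-l) * norm (p \<mu>) + l * norm y"
      using pt norm_comb[of "1-l" l "p \<mu>" y] l by auto
    also have "\<dots> \<le> (1-l) * norm (p \<mu>) + l" using ny l by (simp add: mult_left_le)
    finally have "(1-l)*1 \<le> (1-l)*norm (p \<mu>)" by (simp add: algebra_simps)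
    then show ?thesis using l by (auto dest: mult_left_le_imp_le)
  next
    case False
    define l where "l = \<theta> / \<mu>"
    have l: "0 < l" "l < 1" using False th unfolding l_def by (auto simp: field_simps)
    have c1: "(1-l) + l*(1-\<mu>) = 1-\<theta>" and c2: "l*\<mu> = \<theta>"
      using False th unfolding l_def by (auto simp: field_simps)
    have "(1-l) *\<^sub>R x + l *\<^sub>R p \<mu> = ((1-l) + l*(1-\<mu>)) *\<^sub>R x + (l*\<mu>) *\<^sub>R y"
      unfolding p_def by (simp add: algebra_simps)
    also have "\<dots> = p \<theta>" unfolding p_def c1 c2 ..
    finally have "1 \<le> (1-l) * norm x + l * norm (p \<mu>)"
      using pt norm_comb[of "1-l" l x "p \<mu>"] l by auto
    also have "\<dots> \<le> (1-l) + l * norm (p \<mu>)" using nx l by (simp add: mult_left_le)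
    finally have "l*1 \<le> l*norm (p \<mu>)" by (simp add: algebra_simps)
    then show ?thesis using l by (auto dest: mult_left_le_imp_le)
  qed
  have "closed_segment x y \<subseteq> sphere 0 1"
  proof
    fix z assume "z \<in> closed_segment x y"
    then obtain \<mu> where "0 \<le> \<mu>" "\<mu> \<le> 1" "z = p \<mu>"
      unfolding closed_segment_def p_def by auto
    then have "norm (p \<mu>) \<le> 1" "1 \<le> norm (p \<mu>)" "z = p \<mu>" using le ge by auto
    then have "norm z = 1" by simp
    then show "z \<in> sphere 0 1" by simp
  qed
  with sc xy show False unfolding strictly_convex_norm_def by blast
qed


lemma part2_alg0:
  fixes d :: real
  assumes d: "d > 0" and ad: "\<alpha> = a + d" and th: "\<theta> = -a/d"
  and t1: "\<tau>1 = (b*\<alpha> - a)/d" and t2: "\<tau>2 = (b*\<alpha> + a)/d"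
  shows "(1-\<theta>)*a + \<theta>*\<alpha> = 0" "(1-\<theta>)*b + \<theta>*1 = \<tau>1"
   "(1-\<theta>)*b + \<theta>*(-1) = \<tau>2"
  using d unfolding th ad t1 t2 by (simp_all add: field_simps)

lemma part2_alg:
  fixes d :: real
  assumes d: "d > 0" and ad: "\<alpha> = a + d" and th: "\<theta> = -a/d"
  and t1: "\<tau>1 = (b*\<alpha> - a)/d" and t2: "\<tau>2 = (b*\<alpha> + a)/d"
  and l: "l = (\<delta> + \<tau>2)/2" and m: "m = (\<delta> - \<tau>1)/2" and lm: "l>0" "m>0" and r: "\<rho> = l/(l+m)"
  and a: "a = \<delta>*(s-\<alpha>)" and b: "b = \<delta> * t"
  shows "(1-\<theta>)*a + \<theta>*\<alpha> = 0" "(1-\<theta>)*b + \<theta>*1 = \<tau>1"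
   "(1-\<theta>)*b + \<theta>*(-1) = \<tau>2"
   "l + m = \<delta> - \<theta>" "\<theta>*a + (l+m)*((1-\<rho>)*\<alpha> + \<rho>*\<alpha>) = \<delta>* s"
    "\<theta>*b + (l+m)*((1-\<rho>)*(-1) + \<rho>*1) = \<delta>*t"
proof -
  show "(1-\<theta>)*a + \<theta>*\<alpha> = 0" "(1-\<theta>)*b + \<theta>*1 = \<tau>1"
   "(1-\<theta>)*b + \<theta>*(-1) = \<tau>2"
    using d unfolding th ad t1 t2 by (simp_all add: field_simps)
  show lms: "l + m = \<delta> - \<theta>" unfolding l m t1 t2 th using d by (simp add: field_simps)
  have "(l+m)*((1-\<rho>)*\<alpha> + \<rho>*\<alpha>) = (l+m)*\<alpha>" by (simp add: algebra_simps)
  also have "\<dots> = (\<delta> - \<theta>)*\<alpha>" using lms by simp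
  finally have h: "(l+m)*((1-\<rho>)*\<alpha> + \<rho>*\<alpha>) = (\<delta> - \<theta>)*\<alpha>" .
  have e1: "\<theta>*a + (\<delta> - \<theta>)*\<alpha> = \<delta>*\<alpha> + \<theta>*(a - \<alpha>)" by (simp add: algebra_simps)
  have e2: "\<theta>*(a - \<alpha>) = a" unfolding th ad using d by (simp add: field_simps)
  have e3: "\<delta>*\<alpha> + a = \<delta>* s" using a by (simp add: algebra_simps)
  show "\<theta>*a + (l+m)*((1-\<rho>)*\<alpha> + \<rho>*\<alpha>) = \<delta>* s" unfolding h using e1 e2 e3 by linarith
  have "(l+m)*((1-\<rho>)*(-1) + \<rho>*1) = (l+m)*(2*\<rho>) - (l+m)" by (simp add: algebra_simps)
  also have "(l+m)*(2*\<rho>) = 2*l" using lm r by simp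
  finally have "(l+m)*((1-\<rho>)*(-1) + \<rho>*1) = l - m" by simp
  also have "l - m = (\<tau>1 + \<tau>2)/2" unfolding l m by (simp add: field_simps)
  also have "\<dots> = b*\<alpha>/d" unfolding t1 t2 using d by (simp add: field_simps)
  finally have h2: "(l+m)*((1-\<rho>)*(-1) + \<rho>*1) = b*\<alpha>/d" .
  have "(\<theta>*b + b*\<alpha>/d) * d = b*(\<alpha> - a)" unfolding th using d by (simp add: field_simps)
  also have "\<dots> = b * d" using ad by simp
  finally have "\<theta>*b + b*\<alpha>/d = b" using d by simp
  then show "\<theta>*b + (l+m)*((1-\<rho>)*(-1) + \<rho>*1) = \<delta>*t" unfolding h2 using b by simp
qed

theorem proposition2p6:
  fixes e1 e2 :: "'a::real_normed_vector" and \<alpha> \<delta> :: real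
  assumes sc: "strictly_convex_norm TYPE('a)"
    and basis: "e1 \<noteq> e2" "independent {e1, e2}" "span {e1, e2} = UNIV"
    and alpha: "\<alpha> > 0" "coord e1 e2 \<alpha> 1 \<in> sphere 0 1" "coord e1 e2 \<alpha> (-1) \<in> sphere 0 1"
    and delta: "\<delta> > 0" "coord e1 e2 0 \<delta> \<in> sphere 0 1"
  shows "(cball 0 1 \<inter> strip e1 e2 {\<alpha><..}
           \<subseteq> (\<lambda>y. coord e1 e2 \<alpha> 0 + y) ` ((\<lambda>y. inverse \<delta> *\<^sub>R y) ` interior (cball 0 1))) \<and>
         (((\<lambda>y. coord e1 e2 \<alpha> 0 + y) ` ((\<lambda>y. inverse \<delta> *\<^sub>R y) ` cball 0 1)) \<inter> strip e1 e2 {..<\<alpha>}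
           \<subseteq> interior (cball 0 1))"
proof -
  define C where "C = coord e1 e2"
  have nu: "norm (C \<alpha> 1) = 1" "norm (C \<alpha> (-1)) = 1" "norm (C 0 \<delta>) = 1"
    using alpha delta unfolding C_def by auto
  have nw': "norm (C 0 (-\<delta>)) = 1"
    using nu(3) coord_minus[of e1 e2 0 \<delta>] unfolding C_def by (metis minus_zero norm_minus_cancel)
  have inj: "\<And>s t s' t'. C s t = C s' t' \<Longrightarrow> s = s' \<and> t = t'"
    using coord_inj[OF basis(1,2)] unfolding C_def by blast
  have add: "\<And>s t s' t'. C s t + C s' t' = C (s+s') (t+t')" unfolding C_def by (rule coord_add)
  have scl: "\<And>c s t. c *\<^sub>R C s t = C (c * s) (c * t)" unfolding C_def by (rule coord_scale)
  have ball_int: "ball 0 1 \<subseteq> interior (cball (0::'a) 1)"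
    by (rule interior_maximal) auto
  have n0: "norm (C 0 \<tau>) = \<bar>\<tau>\<bar> / \<delta>" for \<tau>
  proof -
    have "C 0 \<tau> = (\<tau>/\<delta>) *\<^sub>R C 0 \<delta>" using delta(1) by (simp add: scl)
    then show ?thesis using nu(3) delta(1) by simp
  qed
  have vert: "-1 < \<tau> \<and> \<tau> < 1" if h: "norm (C \<alpha> \<tau>) < 1" for \<tau>
  proof (rule ccontr)
    assume "\<not> (-1 < \<tau> \<and> \<tau> < 1)"
    then have "\<tau> \<ge> 1 \<or> \<tau> \<le> -1" by auto
    then show False
    proof
      assume t: "\<tau> \<ge> 1"
      define \<theta> where "\<theta> = 2/(\<tau>+1)"
      have th: "0 < \<theta>" "\<theta> \<le> 1" using t unfolding \<theta>_def by (auto simp: field_simps)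
      have "\<theta> *\<^sub>R C \<alpha> \<tau> + (1-\<theta>) *\<^sub>R C \<alpha> (-1) = C (\<theta>*\<alpha> + (1-\<theta>)*\<alpha>) (\<theta>*\<tau> + (1-\<theta>)*(-1))"
        by (simp add: scl add)
      also have "\<dots> = C \<alpha> 1"
      proof (intro arg_cong2[where f=C])
        show "\<theta>*\<alpha> + (1-\<theta>)*\<alpha> = \<alpha>" by (simp add: algebra_simps)
        have "\<tau> + 1 \<noteq> 0" using t by simp
        then have e: "\<theta>*(\<tau>+1) = 2" unfolding \<theta>_def by (simp add: field_simps)
        have "\<theta>*\<tau> + (1-\<theta>)*(-1) = \<theta>*(\<tau>+1) - 1" by (simp add: algebra_simps)
        then show "\<theta>*\<tau> + (1-\<theta>)*(-1) = 1" using e by simp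
      qed
      finally have eq: "\<theta> *\<^sub>R C \<alpha> \<tau> + (1-\<theta>) *\<^sub>R C \<alpha> (-1) = C \<alpha> 1" .
      have "norm (C \<alpha> 1) < 1" using comb_lt1[OF th h, of "C \<alpha> (-1)"] nu(2) eq by simp
      with nu show False by simp
    next
      assume t: "\<tau> \<le> -1"
      define \<theta> where "\<theta> = 2/(1-\<tau>)"
      have th: "0 < \<theta>" "\<theta> \<le> 1" using t unfolding \<theta>_def by (auto simp: field_simps)
      have "\<theta> *\<^sub>R C \<alpha> \<tau> + (1-\<theta>) *\<^sub>R C \<alpha> 1 = C (\<theta>*\<alpha> + (1-\<theta>)*\<alpha>) (\<theta>*\<tau> + (1-\<theta>)*1)"
        by (simp add: scl add)
      also have "\<dots> = C \<alpha> (-1)"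
      proof (intro arg_cong2[where f=C])
        show "\<theta>*\<alpha> + (1-\<theta>)*\<alpha> = \<alpha>" by (simp add: algebra_simps)
        have "1 - \<tau> \<noteq> 0" using t by simp
        then have e: "\<theta>*(1-\<tau>) = 2" unfolding \<theta>_def by (simp add: field_simps)
        have "\<theta>*\<tau> + (1-\<theta>)*1 = 1 - \<theta>*(1-\<tau>)" by (simp add: algebra_simps)
        then show "\<theta>*\<tau> + (1-\<theta>)*1 = -1" using e by simp
      qed
      finally have eq: "\<theta> *\<^sub>R C \<alpha> \<tau> + (1-\<theta>) *\<^sub>R C \<alpha> 1 = C \<alpha> (-1)" .
      have "norm (C \<alpha> (-1)) < 1" using comb_lt1[OF th h, of "C \<alpha> 1"] nu(1) eq by simp
      with nu show False by simp
    qed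
  qed
  have part1: "x \<in> (\<lambda>y. C \<alpha> 0 + y) ` ((\<lambda>y. inverse \<delta> *\<^sub>R y) ` interior (cball 0 1))"
    if x: "x \<in> cball 0 1" "x \<in> strip e1 e2 {\<alpha><..}" for x
  proof -
    obtain s t where st: "x = C s t" "s > \<alpha>" using x(2) unfolding strip_def C_def by auto
    have nx: "norm x \<le> 1" using x(1) by simp
    have s0: "s > 0" using st alpha(1) by simp
    define \<theta> where "\<theta> = 1 - \<alpha>/s"
    have th: "0 < \<theta>" "\<theta> < 1" using st s0 alpha(1) unfolding \<theta>_def by (auto simp: field_simps)
    have xw: "x \<noteq> C 0 \<delta>" "x \<noteq> C 0 (-\<delta>)" using inj st s0 by force+
    have 1: "norm ((1-\<theta>) *\<^sub>R x + \<theta> *\<^sub>R C 0 \<delta>) < 1"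
      using strict_seg[OF sc nx _ xw(1) th] nu(3) by simp
    have "(1-\<theta>) *\<^sub>R x + \<theta> *\<^sub>R C 0 \<delta> = C ((1-\<theta>)* s) ((1-\<theta>)*t + \<theta>*\<delta>)"
      using st by (simp add: scl add)
    also have "\<dots> = C \<alpha> ((\<alpha>*t + (s-\<alpha>)*\<delta>)/s)"
      using s0 unfolding \<theta>_def by (intro arg_cong2[where f=C]) (auto simp: field_simps)
    finally have eq1: "(1-\<theta>) *\<^sub>R x + \<theta> *\<^sub>R C 0 \<delta> = C \<alpha> ((\<alpha>*t + (s-\<alpha>)*\<delta>)/s)" .
    have r1: "(\<alpha>*t + (s-\<alpha>)*\<delta>)/s < 1" using vert 1 unfolding eq1 by blast
    have 2: "norm ((1-\<theta>) *\<^sub>R x + \<theta> *\<^sub>R C 0 (-\<delta>)) < 1"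
      using strict_seg[OF sc nx _ xw(2) th] nw' by simp
    have "(1-\<theta>) *\<^sub>R x + \<theta> *\<^sub>R C 0 (-\<delta>) = C ((1-\<theta>)* s) ((1-\<theta>)*t + \<theta>*(-\<delta>))"
      using st by (simp add: scl add)
    also have "\<dots> = C \<alpha> ((\<alpha>*t - (s-\<alpha>)*\<delta>)/s)"
      using s0 unfolding \<theta>_def by (intro arg_cong2[where f=C]) (auto simp: field_simps)
    finally have eq2: "(1-\<theta>) *\<^sub>R x + \<theta> *\<^sub>R C 0 (-\<delta>) = C \<alpha> ((\<alpha>*t - (s-\<alpha>)*\<delta>)/s)" .
    have r2: "-1 < (\<alpha>*t - (s-\<alpha>)*\<delta>)/s" using vert 2 unfolding eq2 by blast
    have i1: "\<alpha>*t + (s-\<alpha>)*\<delta> < s" using r1 s0 by (simp add: field_simps)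
    have i2: "-s < \<alpha>*t - (s-\<alpha>)*\<delta>" using r2 s0 by (simp add: field_simps)
    define \<kappa> where "\<kappa> = \<delta>*(s-\<alpha>)/s"
    define c where "c = t*\<alpha>/s"
    define X where "X = \<delta> *\<^sub>R (x - C \<alpha> 0)"
    have kp: "\<kappa> \<ge> 0" using st s0 delta(1) unfolding \<kappa>_def by simp
    have "\<kappa> *\<^sub>R x + c *\<^sub>R C 0 \<delta> = C (\<kappa>* s) (\<kappa>*t + c*\<delta>)" using st by (simp add: scl add)
    also have "\<dots> = X"
      unfolding X_def st(1) C_def coord_diff coord_scale
      unfolding \<kappa>_def c_def using s0 by (intro arg_cong2[where f="coord e1 e2"]) (auto simp: field_simps)
    finally have Xe: "X = \<kappa> *\<^sub>R x + c *\<^sub>R C 0 \<delta>" ..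
    have "norm X \<le> norm (\<kappa> *\<^sub>R x) + norm (c *\<^sub>R C 0 \<delta>)" unfolding Xe by (rule norm_triangle_ineq)
    also have "\<dots> = \<kappa> * norm x + \<bar>c\<bar>" using kp nu(3) by simp
    also have "\<dots> \<le> \<kappa> + \<bar>c\<bar>" using kp nx by (simp add: mult_left_le)
    also have "\<dots> < 1"
    proof -
      have "\<delta>*(s-\<alpha>) + \<bar>t\<bar>*\<alpha> < s" using i1 i2 by (cases "t \<ge> 0") (auto simp: algebra_simps)
      then have "(\<delta>*(s-\<alpha>) + \<bar>t\<bar>*\<alpha>)/s < 1" using s0 by (simp add: field_simps)
      moreover have "\<kappa> + \<bar>c\<bar> = (\<delta>*(s-\<alpha>) + \<bar>t\<bar>*\<alpha>)/s"
        unfolding \<kappa>_def c_def using s0 alpha(1) by (simp add: abs_mult abs_divide add_divide_distrib)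
      ultimately show ?thesis by simp
    qed
    finally have "X \<in> interior (cball 0 1)" using ball_int by auto
    moreover have "x = C \<alpha> 0 + inverse \<delta> *\<^sub>R X" unfolding X_def using delta(1) by simp
    ultimately show ?thesis by blast
  qed
  have part2: "y \<in> interior (cball 0 1)"
    if y: "y \<in> (\<lambda>y. C \<alpha> 0 + y) ` ((\<lambda>y. inverse \<delta> *\<^sub>R y) ` cball 0 1)" "y \<in> strip e1 e2 {..<\<alpha>}" for y
  proof -
    obtain z where z: "norm z \<le> 1" "y = C \<alpha> 0 + inverse \<delta> *\<^sub>R z" using y(1) by auto
    obtain s t where st: "y = C s t" "s < \<alpha>" using y(2) unfolding strip_def C_def by auto
    define a where "a = \<delta>*(s-\<alpha>)"
    define b where "b = \<delta>*t"
    have a0: "a < 0" using st delta(1) unfolding a_def by (simp add: mult_pos_neg)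
    have "z = \<delta> *\<^sub>R (y - C \<alpha> 0)" using z delta(1) by simp
    also have "\<dots> = C a b" unfolding st(1) a_def b_def C_def coord_diff coord_scale by simp
    finally have za: "z = C a b" .
    define d where "d = \<alpha> - a"
    have aa: "d > 0" "\<alpha> = a + d" using a0 alpha(1) unfolding d_def by auto
    define \<theta> where "\<theta> = -a/d"
    have th: "0 < \<theta>" "\<theta> < 1" using a0 aa alpha(1) unfolding \<theta>_def by (auto simp: field_simps)
    have zu: "z \<noteq> C \<alpha> 1" "z \<noteq> C \<alpha> (-1)" using inj za a0 alpha(1) by force+
    define \<tau>1 where "\<tau>1 = (b*\<alpha> - a)/d"
    define \<tau>2 where "\<tau>2 = (b*\<alpha> + a)/d"
    define l where "l = (\<delta> + \<tau>2)/2"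
    define m where "m = (\<delta> - \<tau>1)/2"
    define \<rho> where "\<rho> = l/(l+m)"
    note alg0 = part2_alg0[OF aa \<theta>_def \<tau>1_def \<tau>2_def]
    have "(1-\<theta>) *\<^sub>R z + \<theta> *\<^sub>R C \<alpha> 1 = C ((1-\<theta>)*a + \<theta>*\<alpha>) ((1-\<theta>)*b + \<theta>*1)"
      using za by (simp add: scl add)
    also have "\<dots> = C 0 \<tau>1" using alg0(1,2) by simp
    finally have "\<bar>\<tau>1\<bar> / \<delta> < 1"
      using strict_seg[OF sc z(1) _ zu(1) th] nu(1) n0 by simp
    then have t1: "\<bar>\<tau>1\<bar> < \<delta>" using delta(1) by (simp add: field_simps)
    have "(1-\<theta>) *\<^sub>R z + \<theta> *\<^sub>R C \<alpha> (-1) = C ((1-\<theta>)*a + \<theta>*\<alpha>) ((1-\<theta>)*b + \<theta>*(-1))"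
      using za by (simp add: scl add)
    also have "\<dots> = C 0 \<tau>2" using alg0(1,3) by simp
    finally have "\<bar>\<tau>2\<bar> / \<delta> < 1"
      using strict_seg[OF sc z(1) _ zu(2) th] nu(2) n0 by simp
    then have t2: "\<bar>\<tau>2\<bar> < \<delta>" using delta(1) by (simp add: field_simps)
    have lm: "l > 0" "m > 0" using t1 t2 unfolding l_def m_def by auto
    note alg = part2_alg[OF aa \<theta>_def \<tau>1_def \<tau>2_def l_def m_def lm \<rho>_def a_def b_def]
    have rh: "0 < \<rho>" "\<rho> < 1" using lm unfolding \<rho>_def by (auto simp: field_simps)
    have uv: "C \<alpha> (-1) \<noteq> C \<alpha> 1" using inj by force
    have sv: "norm ((1-\<rho>) *\<^sub>R C \<alpha> (-1) + \<rho> *\<^sub>R C \<alpha> 1) < 1"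
      using strict_seg[OF sc _ _ uv rh] nu by simp
    have lmsum: "l + m = \<delta> - \<theta>" by (rule alg(4))
    have "\<theta> *\<^sub>R z + (l+m) *\<^sub>R ((1-\<rho>) *\<^sub>R C \<alpha> (-1) + \<rho> *\<^sub>R C \<alpha> 1)
        = C (\<theta>*a + (l+m)*((1-\<rho>)*\<alpha> + \<rho>*\<alpha>)) (\<theta>*b + (l+m)*((1-\<rho>)*(-1) + \<rho>*1))"
      using za by (simp add: scl add)
    also have "\<dots> = C (\<delta>* s) (\<delta>*t)"
      using alg(5,6) by simp
    also have "\<dots> = \<delta> *\<^sub>R y" using st scl by simp
    finally have Ye: "\<delta> *\<^sub>R y = \<theta> *\<^sub>R z + (l+m) *\<^sub>R ((1-\<rho>) *\<^sub>R C \<alpha> (-1) + \<rho> *\<^sub>R C \<alpha> 1)" ..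
    have "\<delta> * norm y = norm (\<delta> *\<^sub>R y)" using delta(1) by simp
    also have "\<dots> = norm (\<theta> *\<^sub>R z + (l+m) *\<^sub>R ((1-\<rho>) *\<^sub>R C \<alpha> (-1) + \<rho> *\<^sub>R C \<alpha> 1))"
      by (simp only: Ye)
    also have "\<dots> \<le> \<theta> * norm z + (l+m) * norm ((1-\<rho>) *\<^sub>R C \<alpha> (-1) + \<rho> *\<^sub>R C \<alpha> 1)"
      using th lm by (intro norm_comb) auto
    also have "\<dots> < \<theta> * 1 + (l+m) * 1"
      using th lm z(1) sv by (intro add_le_less_mono mult_left_mono mult_strict_left_mono) auto
    also have "\<dots> = \<delta>" using lmsum by simp
    finally have "norm y < 1" using delta(1) by (simp add: field_simps)
    then show ?thesis using ball_int by auto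
  qed
  show ?thesis
    using part1 part2 unfolding C_def by blast
qed

end
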